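(* Let $d\ge3$ and $k_d=d^2-1$. Let $M_\Sigma$ be the $(d-1)\times(d-1)$ lower-triangular matrix with entries, for $1\le i,j\le d-1$: $(M_\Sigma)_{ij}=0$ if $j>i$; $(M_\Sigma)_{i1}=\frac{2}{i(i+1)}$; $(M_\Sigma)_{ij}=\frac{1}{i(i+1)}$ if $1<j<i$; $(M_\Sigma)_{ii}=\frac{i}{i+1}$ if $i>1$. Let $M_{k_d}=M_\Sigma\oplus\mathbb{I}_{d(d-1)}$ (a $k_d\times k_d$ block-diagonal row-stochastic matrix). Then $\operatorname{rank}_{\mathrm{psd}}(M_{k_d})=d^2-1$.
   Context: The psd rank of a nonnegative $n\times m$ matrix $M$, $\operatorname{rank}_{\mathrm{psd}}(M)$, is the smallest $r$ such that there exist $r\times r$ positive semidefinite matrices $R_1,\dots,R_n$ and $C_1,\dots,C_m$ with $M_{ij}=\operatorname{Tr}(R_iC_j)$ for all $i,j$. *)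

theory Defs
  imports Complex_Main
begin

text \<open>Matrices are represented as functions nat \<Rightarrow> nat \<Rightarrow> real, indexed from 0,
  with explicit dimension bounds; entries outside the bounds are irrelevant.\<close>

definition psd_mat :: "nat \<Rightarrow> (nat \<Rightarrow> nat \<Rightarrow> real) \<Rightarrow> bool" where
  "psd_mat r A \<longleftrightarrow> (\<forall>i<r. \<forall>j<r. A i j = A j i) \<and>
     (\<forall>x :: nat \<Rightarrow> real. 0 \<le> (\<Sum>i<r. \<Sum>j<r. x i * A i j * x j))"

definition trace_prod :: "nat \<Rightarrow> (nat \<Rightarrow> nat \<Rightarrow> real) \<Rightarrow> (nat \<Rightarrow> nat \<Rightarrow> real) \<Rightarrow> real" where
  "trace_prod r A B = (\<Sum>i<r. \<Sum>j<r. A i j * B j i)"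

definition psd_factorization ::
  "nat \<Rightarrow> nat \<Rightarrow> (nat \<Rightarrow> nat \<Rightarrow> real) \<Rightarrow> nat \<Rightarrow> bool" where
  "psd_factorization n m M r \<longleftrightarrow>
     (\<exists>R C :: nat \<Rightarrow> nat \<Rightarrow> nat \<Rightarrow> real.
        (\<forall>i<n. psd_mat r (R i)) \<and> (\<forall>j<m. psd_mat r (C j)) \<and>
        (\<forall>i<n. \<forall>j<m. M i j = trace_prod r (R i) (C j)))"

definition psd_rank :: "nat \<Rightarrow> nat \<Rightarrow> (nat \<Rightarrow> nat \<Rightarrow> real) \<Rightarrow> nat" where
  "psd_rank n m M = (LEAST r. psd_factorization n m M r)"

text \<open>M_Sigma, 0-indexed: entry (i,j) is the paper's entry (i+1,j+1).\<close>
definition M_Sigma :: "nat \<Rightarrow> nat \<Rightarrow> real" where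
  "M_Sigma i j =
     (let a = real (i+1) in
      if j > i then 0
      else if j = 0 then 2 / (a * (a + 1))
      else if j < i then 1 / (a * (a + 1))
      else a / (a + 1))"

definition M_kd :: "nat \<Rightarrow> nat \<Rightarrow> nat \<Rightarrow> real" where
  "M_kd d i j =
     (if i < d - 1 \<and> j < d - 1 then M_Sigma i j
      else if i < d - 1 \<or> j < d - 1 then 0
      else if i = j then 1 else 0)"

end

theory Submission imports Defs "HOL-Library.Function_Algebras" begin

definition qf :: "nat \<Rightarrow> (nat \<Rightarrow> nat \<Rightarrow> real) \<Rightarrow> (nat \<Rightarrow> real) \<Rightarrow> real" where
  "qf r A x = (\<Sum>i<r. \<Sum>j<r. x i * A i j * x j)"

lemma psd_qf: "psd_mat r A \<Longrightarrow> 0 \<le> qf r A x"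
  by (simp add: psd_mat_def qf_def)

lemma qf_expand:
  "qf r A (\<lambda>i. x i + t * y i) = qf r A x
     + t * ((\<Sum>i<r. \<Sum>j<r. y i * A i j * x j) + (\<Sum>i<r. \<Sum>j<r. x i * A i j * y j))
     + t^2 * qf r A y"
  unfolding qf_def
  by (simp add: algebra_simps power2_eq_square sum.distrib sum_distrib_left)

lemma quad_zero:
  fixes b c :: real
  assumes "c \<ge> 0" "\<And>t. 0 \<le> 2 * t * b + t^2 * c"
  shows "b = 0"
proof -
  define t where "t = - b / (c + 1)"
  have "0 \<le> 2 * t * b + t^2 * c" by (rule assms(2))
  hence "0 \<le> (2 * t * b + t^2 * c) * (c+1)^2" using assms(1) by simp
  also have "\<dots> = 2 * (t*(c+1)) * b * (c+1) + (t*(c+1))^2 * c"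
    by (simp add: algebra_simps power2_eq_square)
  also have "t*(c+1) = -b" unfolding t_def using assms(1) by simp
  also have "2 * (-b) * b * (c+1) + (-b)^2 * c = (- (b^2)) * (c + 2)"
    by (simp add: algebra_simps power2_eq_square)
  finally have "b^2 * (c+2) \<le> 0" by simp
  moreover have "c + 2 > 0" using assms(1) by simp
  ultimately have "b^2 \<le> 0" by (simp add: mult_le_0_iff)
  thus ?thesis by simp
qed

lemma kernel:
  assumes psd: "psd_mat r A" and q0: "qf r A x = 0"
  shows "\<forall>i<r. (\<Sum>j<r. A i j * x j) = 0"
proof -
  define y where "y i = (\<Sum>j<r. A i j * x j)" for i
  have sym: "\<And>i j. i<r \<Longrightarrow> j<r \<Longrightarrow> A i j = A j i" using psd by (simp add: psd_mat_def)
  define S where "S = (\<Sum>i<r. y i * y i)"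
  have S1: "(\<Sum>i<r. \<Sum>j<r. y i * A i j * x j) = S"
    unfolding S_def y_def by (simp add: sum_distrib_left mult.assoc)
  have "(\<Sum>i<r. \<Sum>j<r. x i * A i j * y j) = (\<Sum>j<r. \<Sum>i<r. x i * A i j * y j)"
    by (rule sum.swap)
  also have "\<dots> = (\<Sum>j<r. y j * (\<Sum>i<r. A j i * x i))"
    by (simp add: sum_distrib_left sym mult.commute mult.left_commute)
  also have "\<dots> = S" unfolding S_def y_def by simp
  finally have S2: "(\<Sum>i<r. \<Sum>j<r. x i * A i j * y j) = S" .
  have "\<And>t. 0 \<le> 2 * t * S + t^2 * qf r A y"
  proof -
    fix t
    have "0 \<le> qf r A (\<lambda>i. x i + t * y i)" by (rule psd_qf[OF psd])
    thus "0 \<le> 2 * t * S + t^2 * qf r A y" using q0 by (simp add: qf_expand S1 S2)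
  qed
  hence "S = 0" using quad_zero psd_qf[OF psd] by blast
  hence "\<forall>i\<in>{..<r}. y i * y i = 0"
    unfolding S_def by (subst (asm) sum_nonneg_eq_0_iff) auto
  thus ?thesis unfolding y_def by auto
qed

lemma qf_Suc: "qf (Suc r) A x = qf r A x + x r * (\<Sum>j<r. A r j * x j)
   + (\<Sum>i<r. x i * A i r) * x r + x r * A r r * x r"
  by (simp add: qf_def sum.distrib sum_distrib_left sum_distrib_right algebra_simps)

lemma qf_cong: "(\<And>i. i < r \<Longrightarrow> x i = y i) \<Longrightarrow> qf r A x = qf r A y"
  unfolding qf_def by (intro sum.cong refl) auto

lemma psd_mat_qf: "psd_mat r A \<longleftrightarrow> (\<forall>i<r. \<forall>j<r. A i j = A j i) \<and> (\<forall>x. 0 \<le> qf r A x)"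
  by (simp add: psd_mat_def qf_def)

lemma gram: "psd_mat r C \<Longrightarrow> \<exists>B. \<forall>i<r. \<forall>j<r. C i j = (\<Sum>k<r. B k i * B k j)"
proof (induction r arbitrary: C)
  case 0 show ?case by simp
next
  case (Suc r)
  have sym: "\<And>i j. i<Suc r \<Longrightarrow> j<Suc r \<Longrightarrow> C i j = C j i" using Suc.prems by (simp add: psd_mat_def)
  have restr: "psd_mat r C"
    unfolding psd_mat_qf
  proof (intro conjI allI impI)
    fix i j assume "i < r" "j < r" thus "C i j = C j i" using sym by simp
  next
    fix x
    have "0 \<le> qf (Suc r) C (x(r:=0))" using Suc.prems psd_qf by blast
    also have "qf (Suc r) C (x(r:=0)) = qf r C (x(r:=0))" by (simp add: qf_Suc)
    also have "\<dots> = qf r C x" by (rule qf_cong) simp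
    finally show "0 \<le> qf r C x" .
  qed
  define a where "a = C r r"
  define e where "e = (\<lambda>i::nat. if i = r then (1::real) else 0)"
  have qe: "qf (Suc r) C e = a"
  proof -
    have "qf r C e = qf r C (\<lambda>_. 0)" by (rule qf_cong) (simp add: e_def)
    also have "\<dots> = 0" by (simp add: qf_def)
    finally show ?thesis by (simp add: qf_Suc a_def e_def)
  qed
  have a0: "a \<ge> 0" using qe psd_qf[OF Suc.prems] by metis
  show ?case
  proof (cases "a = 0")
    case True
    have "\<forall>i<Suc r. (\<Sum>j<Suc r. C i j * e j) = 0" using kernel[OF Suc.prems] qe True by simp
    moreover have "\<And>i. (\<Sum>j<Suc r. C i j * e j) = C i r"
    proof -
      fix i
      have "(\<Sum>j<Suc r. C i j * e j) = (\<Sum>j<Suc r. if j = r then C i j else 0)"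
        by (intro sum.cong refl) (simp add: e_def)
      also have "\<dots> = C i r" by (subst sum.delta) auto
      finally show "(\<Sum>j<Suc r. C i j * e j) = C i r" .
    qed
    ultimately have z: "\<And>i. i < Suc r \<Longrightarrow> C i r = 0" by simp
    obtain B' where B': "\<forall>i<r. \<forall>j<r. C i j = (\<Sum>k<r. B' k i * B' k j)" using Suc.IH[OF restr] by blast
    define B where "B k i = (if k < r \<and> i < r then B' k i else 0)" for k i
    show ?thesis
    proof (intro exI allI impI)
      fix i j assume i: "i < Suc r" and j: "j < Suc r"
      show "C i j = (\<Sum>k<Suc r. B k i * B k j)"
      proof (cases "i < r \<and> j < r")
        case True
        have "(\<Sum>k<Suc r. B k i * B k j) = (\<Sum>k<r. B' k i * B' k j)"
          using True by (simp add: B_def)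
        then show ?thesis using B' True by simp
      next
        case False
        then have "i = r \<or> j = r" using i j by auto
        then have "C i j = 0" using z sym i j by auto
        moreover have "(\<Sum>k<Suc r. B k i * B k j) = 0"
          using False by (intro sum.neutral) (auto simp: B_def)
        ultimately show ?thesis by simp
      qed
    qed
  next
    case False
    hence apos: "a > 0" using a0 by simp
    define C' where "C' i j = C i j - C i r * C r j / a" for i j
    have psd': "psd_mat r C'"
      unfolding psd_mat_qf
    proof (intro conjI allI impI)
      fix i j assume "i < r" "j < r" thus "C' i j = C' j i" using sym unfolding C'_def by simp
    next
      fix x
      define s where "s = (\<Sum>j<r. C r j * x j)"
      define x' where "x' = x(r := - s / a)"
      have "0 \<le> qf (Suc r) C x'" using Suc.prems psd_qf by blast
      also have "qf r C x' = qf r C x" unfolding x'_def by (rule qf_cong) simp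
      moreover have "(\<Sum>j<r. C r j * x' j) = s" unfolding s_def x'_def by (intro sum.cong refl) simp
      moreover have "(\<Sum>i<r. x' i * C i r) = s" unfolding s_def x'_def
        by (intro sum.cong refl) (simp add: sym mult.commute)
      ultimately have "0 \<le> qf r C x - s * s / a"
        using apos by (simp add: qf_Suc x'_def a_def[symmetric] field_simps)
      also have "qf r C x - s * s / a = qf r C' x"
      proof -
        have "qf r C' x = qf r C x - (\<Sum>i<r. \<Sum>j<r. x i * C i r * C r j * x j / a)"
          unfolding qf_def C'_def by (simp add: algebra_simps sum_subtractf diff_divide_distrib)
        also have "(\<Sum>i<r. \<Sum>j<r. x i * C i r * C r j * x j / a) = (\<Sum>i<r. x i * C i r) * s / a"
          unfolding s_def by (simp add: sum_distrib_left sum_distrib_right sum_divide_distrib mult.assoc) (rule sum.swap)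
        also have "(\<Sum>i<r. x i * C i r) = s" unfolding s_def
          by (intro sum.cong refl) (simp add: sym mult.commute)
        finally show ?thesis by simp
      qed
      finally show "0 \<le> qf r C' x" .
    qed
    obtain B' where B': "\<forall>i<r. \<forall>j<r. C' i j = (\<Sum>k<r. B' k i * B' k j)" using Suc.IH[OF psd'] by blast
    define B where "B k i = (if k < r then (if i < r then B' k i else 0) else C r i / sqrt a)" for k i
    have sq: "sqrt a * sqrt a = a" using a0 by simp
    have last: "B r i * B r j = C r i * C r j / a" for i j
      unfolding B_def using sq by (simp add: field_simps)
    show ?thesis
    proof (intro exI allI impI)
      fix i j assume i: "i < Suc r" and j: "j < Suc r"
      have "(\<Sum>k<Suc r. B k i * B k j) = (\<Sum>k<r. B k i * B k j) + C r i * C r j / a"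
        by (simp add: last)
      also have "(\<Sum>k<r. B k i * B k j) = (if i < r \<and> j < r then C' i j else 0)"
        using B' by (auto simp: B_def)
      finally have eq: "(\<Sum>k<Suc r. B k i * B k j) = (if i < r \<and> j < r then C' i j else 0) + C r i * C r j / a" .
      show "C i j = (\<Sum>k<Suc r. B k i * B k j)"
      proof (cases "i < r \<and> j < r")
        case True
        then show ?thesis using eq sym[of i r] i by (simp add: C'_def)
      next
        case False
        then have "i = r \<or> j = r" using i j by auto
        then have eq2: "(\<Sum>k<Suc r. B k i * B k j) = C r i * C r j / a" using eq by auto
        show ?thesis
        proof (cases "i = r")
          case True
          then show ?thesis using eq2 apos unfolding a_def by simp
        next
          case False
          then have "j = r" using \<open>i = r \<or> j = r\<close> by simp
          then show ?thesis using eq2 apos sym[of i r] i unfolding a_def by simp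
        qed
      qed
    qed
  qed
qed

lemma sum_fun_apply: "(sum f A) x = sum (\<lambda>a. f a x) A"
  by (induction A rule: infinite_finite_induct) auto

interpretation fv: vector_space "\<lambda>(c::real) (f::nat \<Rightarrow> real). (\<lambda>k. c * f k)"
  by unfold_locales (auto simp: fun_eq_iff algebra_simps)

lemma indep_bound:
  fixes v :: "nat \<Rightarrow> nat \<Rightarrow> real" and R :: "nat \<Rightarrow> nat \<Rightarrow> nat \<Rightarrow> real"
  assumes z: "\<And>i j l. i<n \<Longrightarrow> j<n \<Longrightarrow> i<j \<Longrightarrow> l<r \<Longrightarrow> (\<Sum>b<r. R i l b * v j b) = 0"
    and nz: "\<And>i. i<n \<Longrightarrow> \<exists>l<r. (\<Sum>b<r. R i l b * v i b) \<noteq> 0"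
  shows "n \<le> r"
proof -
  define w where "w j = (\<lambda>b. if b<r then v j b else 0)" for j
  define e where "e k = (\<lambda>b::nat. if b = k then (1::real) else 0)" for k
  have claim: "\<forall>j<n. c j = 0" if s0: "(\<Sum>j<n. (\<lambda>b. c j * w j b)) = 0" for c
  proof (rule ccontr)
    assume "\<not> (\<forall>j<n. c j = 0)"
    then obtain j0 where j0: "j0<n \<and> c j0 \<noteq> 0" by auto
    define i where "i = (LEAST j. j<n \<and> c j \<noteq> 0)"
    have i: "i<n \<and> c i \<noteq> 0" unfolding i_def by (rule LeastI[of _ j0]) (rule j0)
    have below: "c j = 0" if "j < i" for j
      using not_less_Least[of j "\<lambda>j. j<n \<and> c j \<noteq> 0"] that i unfolding i_def by auto
    have pt: "(\<Sum>j<n. c j * v j b) = 0" if "b < r" for b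
    proof -
      have "(\<Sum>j<n. (\<lambda>b. c j * w j b)) b = 0" using s0 by simp
      thus ?thesis using that by (simp add: sum_fun_apply w_def)
    qed
    obtain l where l: "l<r" and nzl: "(\<Sum>b<r. R i l b * v i b) \<noteq> 0" using nz i by blast
    have "0 = (\<Sum>b<r. R i l b * (\<Sum>j<n. c j * v j b))" by (simp add: pt)
    also have "\<dots> = (\<Sum>j<n. c j * (\<Sum>b<r. R i l b * v j b))"
      by (simp add: sum_distrib_left algebra_simps) (rule sum.swap)
    also have "\<dots> = (\<Sum>j<n. if j = i then c i * (\<Sum>b<r. R i l b * v i b) else 0)"
    proof (intro sum.cong refl)
      fix j assume "j \<in> {..<n}"
      then show "c j * (\<Sum>b<r. R i l b * v j b) = (if j = i then c i * (\<Sum>b<r. R i l b * v i b) else 0)"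
        using below[of j] z[of i j l] i l by (cases "j < i"; cases "j = i") auto
    qed
    also have "\<dots> = c i * (\<Sum>b<r. R i l b * v i b)" using i by (subst sum.delta) auto
    finally show False using i nzl by simp
  qed
  have inj: "inj_on w {..<n}"
  proof -
    have False if ab: "a < b" "b < n" "w a = w b" for a b
    proof -
      have "v a x = v b x" if "x < r" for x using fun_cong[OF ab(3), of x] that by (simp add: w_def)
      then have "(\<Sum>x<r. R a l x * v a x) = 0" if "l < r" for l
        using z[of a b l] ab that by simp
      then show False using nz[of a] ab by auto
    qed
    then show ?thesis unfolding inj_on_def by (metis lessThan_iff linorder_neqE_nat)
  qed
  have indep: "fv.independent (w ` {..<n})"
  proof (rule fv.independent_if_scalars_zero)
    show "finite (w ` {..<n})" by simp
  next
    fix f x assume s: "(\<Sum>x\<in>w ` {..<n}. (\<lambda>k. f x * x k)) = 0" and x: "x \<in> w ` {..<n}"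
    have "(\<Sum>j<n. (\<lambda>k. (f \<circ> w) j * w j k)) = 0" using s by (simp add: sum.reindex[OF inj])
    then have "\<forall>j<n. (f \<circ> w) j = 0" by (rule claim)
    then show "f x = 0" using x by auto
  qed
  have span: "w ` {..<n} \<subseteq> fv.span (e ` {..<r})"
  proof
    fix y assume "y \<in> w ` {..<n}"
    then obtain j where y: "y = w j" by auto
    have "w j = (\<Sum>k<r. (\<lambda>b. w j k * e k b))"
    proof
      fix b
      have "(\<Sum>k<r. (\<lambda>b. w j k * e k b)) b = (\<Sum>k<r. w j k * e k b)"
        by (simp only: sum_fun_apply)
      also have "\<dots> = (\<Sum>k<r. if k = b then w j b else 0)"
        by (intro sum.cong refl) (auto simp: e_def)
      also have "\<dots> = w j b" by (subst sum.delta) (auto simp: w_def)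
      finally show "w j b = (\<Sum>k<r. (\<lambda>b. w j k * e k b)) b" by simp
    qed
    also have "\<dots> \<in> fv.span (e ` {..<r})"
      by (intro fv.span_sum fv.span_scale fv.span_base) auto
    finally show "y \<in> fv.span (e ` {..<r})" using y by simp
  qed
  have "card (w ` {..<n}) \<le> card (e ` {..<r})"
    using fv.independent_span_bound[OF _ indep span] by simp
  also have "\<dots> \<le> r" using card_image_le[of "{..<r}" e] by simp
  finally show ?thesis using card_image[OF inj] by simp
qed

lemma qf_alt: "qf r A x = (\<Sum>l<r. x l * (\<Sum>b<r. A l b * x b))"
  unfolding qf_def by (simp add: sum_distrib_left mult.assoc)

lemma trace_gram:
  assumes "\<forall>i<r. \<forall>j<r. C i j = (\<Sum>k<r. B k i * B k j)"
  shows "trace_prod r R C = (\<Sum>k<r. qf r R (B k))"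
proof -
  have "trace_prod r R C = (\<Sum>i<r. \<Sum>j<r. R i j * (\<Sum>k<r. B k j * B k i))"
    unfolding trace_prod_def using assms by (auto intro!: sum.cong)
  also have "\<dots> = (\<Sum>i<r. \<Sum>j<r. \<Sum>k<r. B k i * R i j * B k j)"
    by (simp add: sum_distrib_left algebra_simps)
  also have "\<dots> = (\<Sum>i<r. \<Sum>k<r. \<Sum>j<r. B k i * R i j * B k j)"
    by (rule sum.cong[OF refl], rule sum.swap)
  also have "\<dots> = (\<Sum>k<r. \<Sum>i<r. \<Sum>j<r. B k i * R i j * B k j)"
    by (rule sum.swap)
  finally show ?thesis unfolding qf_def .
qed

lemma lower:
  assumes tri: "\<And>i j. i<n \<Longrightarrow> j<n \<Longrightarrow> i<j \<Longrightarrow> M i j = 0"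
    and diag: "\<And>i. i<n \<Longrightarrow> M i i > 0"
    and f: "psd_factorization n n M r"
  shows "n \<le> r"
proof -
  obtain R C where R: "\<forall>i<n. psd_mat r (R i)" and C: "\<forall>j<n. psd_mat r (C j)"
    and MRC: "\<forall>i<n. \<forall>j<n. M i j = trace_prod r (R i) (C j)"
    using f unfolding psd_factorization_def by blast
  have "\<forall>j. \<exists>B. j<n \<longrightarrow> (\<forall>a<r. \<forall>b<r. C j a b = (\<Sum>k<r. B k a * B k b))"
    using gram C by blast
  then obtain BB where BB: "\<And>j. j<n \<Longrightarrow> \<forall>a<r. \<forall>b<r. C j a b = (\<Sum>k<r. BB j k a * BB j k b)"
    by metis
  have Mq: "M i j = (\<Sum>k<r. qf r (R i) (BB j k))" if "i<n" "j<n" for i j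
    using MRC trace_gram[OF BB[OF that(2)]] that by simp
  have nn: "0 \<le> qf r (R i) x" if "i<n" for i x using psd_qf R that by blast
  have "\<forall>i. \<exists>k. i<n \<longrightarrow> k<r \<and> qf r (R i) (BB i k) > 0"
  proof (intro allI impI)
    fix i
    show "\<exists>k. i<n \<longrightarrow> k<r \<and> qf r (R i) (BB i k) > 0"
    proof (cases "i < n")
      case True
      show ?thesis
      proof (rule ccontr)
        assume "\<not> ?thesis"
        then have "\<forall>k<r. qf r (R i) (BB i k) \<le> 0" using True by auto
        then have "(\<Sum>k<r. qf r (R i) (BB i k)) \<le> 0" by (intro sum_nonpos) auto
        then show False using Mq[OF True True] diag[OF True] by simp
      qed
    qed simp
  qed
  then obtain kk where kk: "\<And>i. i<n \<Longrightarrow> kk i < r \<and> qf r (R i) (BB i (kk i)) > 0" by metis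
  define v where "v i = BB i (kk i)" for i
  show ?thesis
  proof (rule indep_bound[where R=R and v=v])
    fix i j l assume ij: "i<n" "j<n" "i<j" "l<r"
    have "(\<Sum>k<r. qf r (R i) (BB j k)) = 0" using Mq[of i j] tri[of i j] ij by simp
    then have "\<forall>k\<in>{..<r}. qf r (R i) (BB j k) = 0"
      by (subst (asm) sum_nonneg_eq_0_iff) (auto intro: nn[OF ij(1)])
    then have "qf r (R i) (v j) = 0" using kk[OF ij(2)] unfolding v_def by auto
    then show "(\<Sum>b<r. R i l b * v j b) = 0" using kernel R ij by blast
  next
    fix i assume i: "i<n"
    show "\<exists>l<r. (\<Sum>b<r. R i l b * v i b) \<noteq> 0"
    proof (rule ccontr)
      assume "\<not> ?thesis"
      then have "qf r (R i) (v i) = 0" by (simp add: qf_alt)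
      then show False using kk[OF i] unfolding v_def by simp
    qed
  qed
qed

lemma upper:
  assumes nn: "\<And>i j. i<n \<Longrightarrow> j<n \<Longrightarrow> M i j \<ge> 0"
  shows "psd_factorization n n M n"
proof -
  define R where "R = (\<lambda>(i::nat) (a::nat) (b::nat). if a = i \<and> b = i then (1::real) else 0)"
  define C where "C = (\<lambda>(j::nat) (a::nat) (b::nat). if a = b then M a j else 0)"
  have 1: "\<forall>i<n. psd_mat n (R i)" unfolding psd_mat_def R_def
    by (auto intro!: sum_nonneg)
  have h: "0 \<le> x*m*x" if "(0::real) \<le> m" for x m
  proof -
    have e: "x*m*x = m*(x*x)" by simp
    have "0 \<le> m*(x*x)" by (rule mult_nonneg_nonneg[OF that zero_le_square])
    thus ?thesis by (subst e)
  qed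
  have 2: "\<forall>j<n. psd_mat n (C j)" unfolding psd_mat_def C_def
    using nn by (auto intro!: sum_nonneg h)
  have 3: "\<forall>i<n. \<forall>j<n. M i j = trace_prod n (R i) (C j)"
  proof (intro allI impI)
    fix i j assume i: "i < n" and j: "j < n"
    have "trace_prod n (R i) (C j) = (\<Sum>a<n. if a = i then M i j else 0)"
      unfolding trace_prod_def
    proof (rule sum.cong[OF refl])
      fix a assume a: "a \<in> {..<n}"
      have "(\<Sum>b<n. R i a b * C j b a) = (\<Sum>b<n. if b = a then (if a = i then M i j else 0) else 0)"
        unfolding R_def C_def by (rule sum.cong[OF refl]) auto
      also have "\<dots> = (if a = i then M i j else 0)" using a by (subst sum.delta) auto
      finally show "(\<Sum>b<n. R i a b * C j b a) = (if a = i then M i j else 0)" .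
    qed
    also have "\<dots> = M i j" using i by (simp add: sum.delta)
    finally show "M i j = trace_prod n (R i) (C j)" by simp
  qed
  show ?thesis unfolding psd_factorization_def using 1 2 3 by blast
qed

lemma Mkd_props:
  assumes d: "d \<ge> 3"
  shows "\<And>i j. i < d^2-1 \<Longrightarrow> j < d^2-1 \<Longrightarrow> i < j \<Longrightarrow> M_kd d i j = 0"
    and "\<And>i. i < d^2-1 \<Longrightarrow> M_kd d i i > 0"
    and "\<And>i j. i < d^2-1 \<Longrightarrow> j < d^2-1 \<Longrightarrow> M_kd d i j \<ge> 0"
proof -
  fix i j :: nat
  assume "i < j"
  then show "M_kd d i j = 0" by (auto simp: M_kd_def M_Sigma_def Let_def)
next
  fix i :: nat
  have p: "0 < real i + 1" by simp
  show "M_kd d i i > 0" using p by (auto simp: M_kd_def M_Sigma_def Let_def)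
next
  fix i j :: nat
  have p: "0 < real i + 1" "0 \<le> real i" by simp_all
  show "M_kd d i j \<ge> 0" using p by (auto simp: M_kd_def M_Sigma_def Let_def)
qed

theorem mainTheorem11:
  fixes d :: nat
  assumes "d \<ge> 3"
  shows "psd_rank (d^2 - 1) (d^2 - 1) (M_kd d) = d^2 - 1"
  unfolding psd_rank_def
proof (rule Least_equality)
  show "psd_factorization (d^2 - 1) (d^2 - 1) (M_kd d) (d^2 - 1)"
    by (rule upper) (rule Mkd_props(3)[OF assms])
next
  fix y assume "psd_factorization (d^2 - 1) (d^2 - 1) (M_kd d) y"
  then show "d^2 - 1 \<le> y"
    by (rule lower[rotated 2]) (auto intro: Mkd_props[OF assms])
qed

end
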